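(* Let $k \ge 2$ be an integer, $h_k(x) = x + \left\lfloor \frac{x}{k-1} \right\rfloor + 1$ for non-negative integers $x$, and let $\mathcal{G}$ be the Grundy function of Maximum Nim with rule function $f(x)=\lfloor x/k \rfloor$. Then: (i) $h_k(x) = \left\lfloor \frac{h_k(x)}{k} \right\rfloor + x + 1$ for every non-negative integer $x$; (ii) $\mathcal{G}(h_k(x)) = \mathcal{G}(x)$ for every non-negative integer $x$; (iii) for every non-negative integer $m$ there exists a non-negative integer $x_0$ such that $\{x \in \mathbb{Z}_{\ge 0} : \mathcal{G}(x) = m\} = \{h_k^p(x_0) : p \in \mathbb{Z}_{\ge 0}\}$, where $h_k^p$ is the $p$-th functional iterate of $h_k$.
   Context: Maximum Nim with rule function $f(x)=\lfloor x/k\rfloor$: a position is a pile of $x \ge 0$ stones, and from $x$ one may move to $x-u$ for any integer $u$ with $1 \le u \le \lfloor x/k \rfloor$. The Grundy number is defined recursively by $\mathcal{G}(x) = \mathrm{mex}\{\mathcal{G}(x-u) : 1 \le u \le \lfloor x/k\rfloor\}$, where $\mathrm{mex}(S)$ is the least non-negative integer not in $S$. *)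

theory Defs
  imports Main
begin

definition mex :: "nat set \<Rightarrow> nat" where
  "mex S = (LEAST n. n \<notin> S)"

function maxnim_grundy :: "nat \<Rightarrow> nat \<Rightarrow> nat" where
  "maxnim_grundy k x =
     mex ((\<lambda>u. maxnim_grundy k (x - u)) ` {1..x div k})"
  by auto
termination
  by (relation "measure snd") (auto simp: div_le_dividend intro: diff_less_mono2 dest: order_trans[OF _ div_le_dividend])

definition h :: "nat \<Rightarrow> nat \<Rightarrow> nat" where
  "h k x = x + x div (k - 1) + 1"

end

theory Submission
  imports Defs
begin

declare maxnim_grundy.simps[simp del]

lemma hA:
  assumes "k \<ge> 2"
  shows "h k y div k = y div (k-1)" and "h k y = h k y div k + y + 1" and "\<not> k dvd h k y"
proof -
  obtain j where kj: "k = Suc j" and j: "j \<ge> 1" using assms by (cases k) auto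
  define q where "q = y div j"
  define r where "r = y mod j"
  have y: "y = q*j + r" by (simp add: q_def r_def)
  have r: "r < j" using j by (simp add: r_def)
  have hy: "h k y = (r + 1) + q * k" unfolding h_def kj using y q_def by simp
  have d: "h k y div k = q" unfolding hy using r kj by (intro div_nat_eqI) (auto simp: algebra_simps)
  show "h k y div k = y div (k-1)" using d kj q_def by simp
  show "h k y = h k y div k + y + 1" using d hy y kj by simp
  have "r + 1 < k" using r kj by simp
  then have "h k y mod k = r + 1" unfolding hy by simp
  then show "\<not> k dvd h k y" by (simp add: dvd_eq_mod_eq_0)
qed

lemma hC:
  assumes "k \<ge> 2" "\<not> k dvd x"
  shows "h k (x - x div k - 1) = x"
proof -
  obtain j where kj: "k = Suc j" and j: "j \<ge> 1" using assms by (cases k) auto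
  define a where "a = x div k"
  define b where "b = x mod k"
  have x: "x = a*j + a + b" unfolding a_def b_def kj by (metis add.commute div_mult_mod_eq mult_Suc_right)
  have b: "b \<ge> 1" "b < Suc j" using assms kj by (auto simp: b_def dvd_eq_mod_eq_0)
  have dx: "x div k = a" by (simp add: a_def)
  have y: "x - x div k - 1 = a*j + (b - 1)" using x b dx by simp
  have "(a*j + (b - 1)) div j = a" using b j by (intro div_nat_eqI) (auto simp: algebra_simps)
  then show ?thesis unfolding h_def y using kj x b by simp
qed

lemma hD:
  assumes "y < y'" shows "h k y < h k y'"
  unfolding h_def using assms div_le_mono[of y y' "k-1"] by simp

lemma hE:
  assumes "k \<ge> 2" "z + 1 \<le> x - x div k"
  shows "h k z \<le> x"
proof (rule ccontr)
  assume nle: "\<not> h k z \<le> x"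
  obtain j where kj: "k = Suc j" and j: "j \<ge> 1" using assms by (cases k) auto
  define q where "q = z div j"
  define r where "r = z mod j"
  have z: "z = q*j + r" by (simp add: q_def r_def)
  have r: "r < j" using j by (simp add: r_def)
  have hz: "h k z = q*j + q + r + 1" unfolding h_def kj using z q_def by simp
  define a where "a = x div k"
  define b where "b = x mod k"
  have x: "x = a*j + a + b" unfolding a_def b_def kj by (metis add.commute div_mult_mod_eq mult_Suc_right)
  have b: "b < Suc j" using kj by (simp add: b_def)
  have dx: "x div k = a" by (simp add: a_def)
  have c1: "q*j + r + 1 \<le> a*j + b" using assms(2) z x dx by simp
  have c2: "a*j + a + b < q*j + q + r + 1" using nle hz x by simp
  consider "q + 1 \<le> a" | "a + 1 \<le> q" | "a = q" by linarith
  then show False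
  proof cases
    case 1
    then have "(q+1)*(j+1) \<le> a*(j+1)" by (rule mult_le_mono1)
    then show ?thesis using c2 r by (simp add: algebra_simps)
  next
    case 2
    then have "(a+1)*j \<le> q*j" by (rule mult_le_mono1)
    then show ?thesis using c1 b by (simp add: algebra_simps)
  next
    case 3
    then show ?thesis using c1 c2 by simp
  qed
qed

function rt :: "nat \<Rightarrow> nat \<Rightarrow> nat" where
  "rt k x = (if k dvd x then x else rt k (x - x div k - 1))"
  by auto
termination
proof (relation "measure snd")
  fix k x :: nat assume "\<not> k dvd x"
  then have "x \<noteq> 0" by (metis dvd_0_right)
  then show "((k, x - x div k - 1), k, x) \<in> measure snd" by simp
qed auto

declare rt.simps[simp del]

lemma rt_props: "k dvd rt k x \<and> rt k x \<le> x"
proof (induction k x rule: rt.induct)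
  case (1 k x)
  show ?case
  proof (cases "k dvd x")
    case True
    then have "rt k x = x" by (subst rt.simps) simp
    then show ?thesis using True by simp
  next
    case False
    then have "rt k x = rt k (x - x div k - 1)" by (subst rt.simps) simp
    then show ?thesis using 1 False by auto
  qed
qed

lemma rt_h:
  assumes "k \<ge> 2" shows "rt k (h k y) = rt k y"
proof -
  have "h k y - h k y div k - 1 = y" using hA[OF assms, of y] by linarith
  then show ?thesis using hA(3)[OF assms, of y] by (subst rt.simps) simp
qed

lemma rt_orbit:
  assumes "k \<ge> 2" shows "\<exists>p. x = (h k ^^ p) (rt k x)"
proof (induction x rule: less_induct)
  case (less x)
  show ?case
  proof (cases "k dvd x")
    case True
    then have "rt k x = x" by (subst rt.simps) simp
    then show ?thesis by (metis funpow_0)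
  next
    case False
    then have x0: "x \<noteq> 0" by (metis dvd_0_right)
    then have "x - x div k - 1 < x" by simp
    then obtain p where p: "x - x div k - 1 = (h k ^^ p) (rt k (x - x div k - 1))" using less by blast
    have "rt k x = rt k (x - x div k - 1)" using False by (subst rt.simps) simp
    moreover have "x = h k ((h k ^^ p) (rt k (x - x div k - 1)))" using p hC[OF assms False] by simp
    ultimately have "x = (h k ^^ Suc p) (rt k x)" by simp
    then show ?thesis by blast
  qed
qed

lemma rt_iter:
  assumes "k \<ge> 2" "k dvd x0" shows "rt k ((h k ^^ p) x0) = x0"
proof (induction p)
  case 0
  then show ?case using assms by (subst rt.simps) simp
next
  case (Suc p)
  then show ?case using rt_h[OF assms(1)] by simp
qed

lemma iter_ge: "(h k ^^ p) x \<ge> p + x"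
  by (induction p) (auto simp: h_def)

lemma iter_mono: assumes "p < p'" shows "(h k ^^ p) x < (h k ^^ p') x"
proof -
  have "strict_mono (\<lambda>p. (h k ^^ p) x)"
    by (rule strict_mono_Suc_iff[THEN iffD2]) (auto simp: h_def)
  from strict_monoD[OF this assms] show ?thesis by simp
qed

lemma mex_eq:
  assumes "g \<notin> S" "\<And>i. i < g \<Longrightarrow> i \<in> S" shows "mex S = g"
  unfolding mex_def
  by (rule Least_equality) (use assms in \<open>auto simp: not_less[symmetric]\<close>)

lemma iter_less_iff: "(h k ^^ p) x < (h k ^^ p') x \<longleftrightarrow> p < p'"
  by (metis iter_mono less_asym not_less_iff_gr_or_eq)

lemma last_step:
  fixes P :: "nat \<Rightarrow> bool"
  assumes "P 0" "\<And>p. P p \<Longrightarrow> p < n"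
  shows "\<exists>p. P p \<and> \<not> P (Suc p)"
proof (rule ccontr)
  assume "\<not> ?thesis"
  then have "\<And>p. P p \<Longrightarrow> P (Suc p)" by blast
  then have "P m" for m by (induction m) (use assms(1) in auto)
  then show False using assms(2)[of n] by simp
qed

lemma G_eq:
  assumes k: "k \<ge> 2"
  shows "maxnim_grundy k x = rt k x div k"
proof (induction x rule: less_induct)
  case (less x)
  define g where "g = rt k x div k"
  have rtx: "rt k x = g * k" using rt_props[of k x] unfolding g_def by simp
  have S: "(\<lambda>u. maxnim_grundy k (x-u)) ` {1..x div k} = (\<lambda>u. rt k (x-u) div k) ` {1..x div k}"
  proof (rule image_cong[OF refl])
    fix u assume "u \<in> {1..x div k}"
    moreover have "x div k \<le> x" by (rule div_le_dividend)
    ultimately have u1: "1 \<le> u" "u \<le> x" by (auto intro: order_trans)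
    then have "x - u < x" by (intro diff_less) auto
    then show "maxnim_grundy k (x-u) = rt k (x-u) div k" by (rule less)
  qed
  have "mex ((\<lambda>u. rt k (x-u) div k) ` {1..x div k}) = g"
  proof (rule mex_eq)
    show "g \<notin> (\<lambda>u. rt k (x-u) div k) ` {1..x div k}"
    proof
      assume "g \<in> (\<lambda>u. rt k (x-u) div k) ` {1..x div k}"
      then obtain u where u: "u \<in> {1..x div k}" and gu: "rt k (x-u) div k = g" by auto
      define z where "z = x - u"
      have "u \<le> x" using u div_le_dividend[of x k] by (auto intro: order_trans)
      then have zx: "z < x" "x - x div k \<le> z" using u by (auto simp: z_def)
      have "rt k z = g * k" using rt_props[of k z] gu unfolding z_def by (metis dvd_div_mult_self)
      then have rz: "rt k z = rt k x" using rtx by simp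
      show False
      proof (cases "k dvd x")
        case True
        then have "rt k x = x" by (subst rt.simps) simp
        then show False using rz rt_props[of k z] zx by simp
      next
        case False
        define y where "y = x - x div k - 1"
        have hy: "h k y = x" using hC[OF k False] by (simp add: y_def)
        have ry: "rt k y = rt k x" using rt_h[OF k, of y] hy by simp
        have "x = x div k + y + 1" using hA(2)[OF k, of y] hy by simp
        then have yz: "y < z" using zx by linarith
        obtain p where p: "z = (h k ^^ p) (rt k x)" using rt_orbit[OF k, of z] rz by auto
        obtain q where q: "y = (h k ^^ q) (rt k x)" using rt_orbit[OF k, of y] ry by auto
        have zh: "z < (h k ^^ Suc q) (rt k x)" using zx hy q by simp
        have "q < p" using yz p q iter_less_iff by metis
        moreover have "p < Suc q" using zh p iter_less_iff by metis
        ultimately show False by simp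
      qed
    qed
  next
    fix i assume ig: "i < g"
    define r0 where "r0 = i * k"
    have r0d: "k dvd r0" by (simp add: r0_def)
    have "r0 < rt k x" using ig k rtx by (simp add: r0_def)
    then have r0x: "r0 < x" using rt_props[of k x] by simp
    obtain p where p1: "(h k ^^ p) r0 < x" and p2: "\<not> (h k ^^ Suc p) r0 < x"
    proof -
      have "p < x" if "(h k ^^ p) r0 < x" for p
        using that iter_ge[where k=k and p=p and x=r0] by linarith
      then show ?thesis using that last_step[of "\<lambda>p. (h k ^^ p) r0 < x" x] r0x by auto
    qed
    define z where "z = (h k ^^ p) r0"
    have hz: "x \<le> h k z" using p2 by (simp add: z_def)
    have rz: "rt k z = r0" using rt_iter[OF k r0d] by (simp add: z_def)
    have zge: "x - x div k \<le> z"
    proof (rule ccontr)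
      assume "\<not> x - x div k \<le> z"
      then have "h k z \<le> x" using hE[OF k] by simp
      then have "h k z = x" using hz by simp
      then have "rt k x = r0" using rt_h[OF k, of z] rz by simp
      then show False using ig rtx k by (simp add: r0_def)
    qed
    have zx: "z < x" using p1 by (simp add: z_def)
    show "i \<in> (\<lambda>u. rt k (x-u) div k) ` {1..x div k}"
    proof
      show "x - z \<in> {1..x div k}" using zx zge by auto
      show "i = rt k (x - (x - z)) div k" using zx rz k by (simp add: r0_def)
    qed
  qed
  then show ?case using S by (subst maxnim_grundy.simps) (simp add: g_def)
qed

theorem proposition1:
  fixes k :: nat
  assumes "k \<ge> 2"
  shows "(\<forall>x. h k x = h k x div k + x + 1)
    \<and> (\<forall>x. maxnim_grundy k (h k x) = maxnim_grundy k x)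
    \<and> (\<forall>m. \<exists>x0. {x. maxnim_grundy k x = m} = {(h k ^^ p) x0 | p. True})"
proof (intro conjI allI)
  fix x show "h k x = h k x div k + x + 1" using hA(2)[OF assms] .
next
  fix x show "maxnim_grundy k (h k x) = maxnim_grundy k x"
    using G_eq[OF assms] rt_h[OF assms] by simp
next
  fix m
  show "\<exists>x0. {x. maxnim_grundy k x = m} = {(h k ^^ p) x0 | p. True}"
  proof (intro exI set_eqI iffI)
    fix x assume "x \<in> {x. maxnim_grundy k x = m}"
    then have "rt k x div k = m" using G_eq[OF assms] by simp
    then have "rt k x = m * k" using rt_props[of k x] by (metis dvd_div_mult_self)
    then show "x \<in> {(h k ^^ p) (m*k) | p. True}" using rt_orbit[OF assms, of x] by auto
  next
    fix x assume "x \<in> {(h k ^^ p) (m*k) | p. True}"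
    then obtain p where "x = (h k ^^ p) (m*k)" by auto
    then have "rt k x = m * k" using rt_iter[OF assms, of "m*k" p] by simp
    then show "x \<in> {x. maxnim_grundy k x = m}" using G_eq[OF assms] assms by simp
  qed
qed

end
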